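(* Let $G$ be an undirected unweighted graph on $n$ vertices with minimum cut value $c\geq 1$, and fix a minimum cut $C$ of $G$. If Karger's contraction process is run on $G$ until there are at most $cn$ edges remaining in the (contracted) graph, then $C$ survives with at least a constant probability (bounded below by an absolute constant independent of $G$).
   Context: Karger's contraction process: repeatedly choose a uniformly random edge of the current multigraph and contract its two endpoints into a single super-vertex, keeping parallel edges and removing self-loops. Each super-vertex corresponds to a set of original vertices. A cut $C$ of $G$ (the set of edges between $S$ and $V\setminus S$) survives if none of its edges has been contracted, i.e. every super-vertex is contained in $S$ or in $V\setminus S$. The minimum cut value is $\min_{\emptyset\ne S\subsetneq V}$ of the number of edges between $S$ and $V\setminus S$. *)

theory Defs
  imports "HOL-Probability.Probability"
begin

definition simple_graph :: "'a set \<Rightarrow> 'a set set \<Rightarrow> bool" where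
  "simple_graph V E \<longleftrightarrow> finite V \<and> (\<forall>e\<in>E. \<exists>u v. u \<in> V \<and> v \<in> V \<and> u \<noteq> v \<and> e = {u, v})"

definition cut_edges :: "'a set set \<Rightarrow> 'a set \<Rightarrow> 'a set set" where
  "cut_edges E S = {e \<in> E. \<exists>u v. e = {u, v} \<and> u \<in> S \<and> v \<notin> S}"

definition min_cut_value :: "'a set \<Rightarrow> 'a set set \<Rightarrow> nat" where
  "min_cut_value V E = Min {card (cut_edges E S) | S. S \<noteq> {} \<and> S \<subset> V}"

text \<open>State of the contraction process: the partition of V into super-vertices.
  The edges of the current multigraph are exactly the original edges whose endpoints
  lie in different super-vertices (parallel edges kept, self-loops removed).\<close>
definition remaining_edges :: "'a set set \<Rightarrow> 'a set set \<Rightarrow> 'a set set" where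
  "remaining_edges E P = {e \<in> E. \<not> (\<exists>B\<in>P. e \<subseteq> B)}"

definition contract :: "'a set set \<Rightarrow> 'a set \<Rightarrow> 'a set set" where
  "contract P e = (P - {B \<in> P. B \<inter> e \<noteq> {}}) \<union> {\<Union> {B \<in> P. B \<inter> e \<noteq> {}}}"

definition karger_step :: "'a set set \<Rightarrow> nat \<Rightarrow> 'a set set \<Rightarrow> 'a set set pmf" where
  "karger_step E k P =
     (if card (remaining_edges E P) \<le> k then return_pmf P
      else map_pmf (contract P) (pmf_of_set (remaining_edges E P)))"

text \<open>Run the process until at most k edges remain. At most card V - 1 contractions can
  happen, so card V iterations of the (stopping) step reach the final state.\<close>
definition karger_run :: "'a set \<Rightarrow> 'a set set \<Rightarrow> nat \<Rightarrow> 'a set set pmf" where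
  "karger_run V E k =
     ((\<lambda>p. bind_pmf p (karger_step E k)) ^^ card V) (return_pmf ((\<lambda>v. {v}) ` V))"

definition cut_survives :: "'a set \<Rightarrow> 'a set set \<Rightarrow> bool" where
  "cut_survives S P \<longleftrightarrow> (\<forall>B\<in>P. B \<subseteq> S \<or> B \<inter> S = {})"

end

theory Submission
  imports Defs
begin

fun krun :: "'a set set \<Rightarrow> nat \<Rightarrow> nat \<Rightarrow> 'a set set \<Rightarrow> 'a set set pmf" where
  "krun E k 0 P = return_pmf P"
| "krun E k (Suc t) P = bind_pmf (karger_step E k P) (krun E k t)"

lemma funpow_krun:
  "((\<lambda>p. bind_pmf p (karger_step E k)) ^^ t) p = bind_pmf p (krun E k t)"
proof (induction t arbitrary: p)
  case 0
  then show ?case by (simp add: bind_return_pmf')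
next
  case (Suc t)
  show ?case
    by (simp only: funpow_Suc_right o_apply Suc bind_assoc_pmf krun.simps)
qed

lemma prob_bind_pmf_of_set:
  assumes "finite R" "R \<noteq> {}"
  shows "measure_pmf.prob (bind_pmf (pmf_of_set R) f) A
       = (\<Sum>e\<in>R. measure_pmf.prob (f e) A) / card R"
proof -
  have "ennreal (measure_pmf.prob (bind_pmf (pmf_of_set R) f) A)
      = emeasure (bind_pmf (pmf_of_set R) f) A"
    by (simp add: measure_pmf.emeasure_eq_measure)
  also have "\<dots> = (\<integral>\<^sup>+x. emeasure (f x) A \<partial>measure_pmf (pmf_of_set R))"
    by simp
  also have "\<dots> = (\<Sum>e\<in>R. emeasure (f e) A) / card R"
    using assms by (simp add: nn_integral_pmf_of_set)
  also have "\<dots> = ennreal (\<Sum>e\<in>R. measure_pmf.prob (f e) A) / ennreal (real (card R))"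
    by (simp add: measure_pmf.emeasure_eq_measure ennreal_of_nat_eq_real_of_nat)
  also have "\<dots> = ennreal ((\<Sum>e\<in>R. measure_pmf.prob (f e) A) / card R)"
    using assms by (intro divide_ennreal) (auto simp: sum_nonneg card_gt_0_iff)
  finally show ?thesis
    by (subst (asm) ennreal_inj) (auto intro!: sum_nonneg divide_nonneg_nonneg)
qed

definition part_inv :: "'a set \<Rightarrow> 'a set set \<Rightarrow> bool" where
  "part_inv V P \<longleftrightarrow> finite P \<and> (\<forall>B\<in>P. B \<noteq> {}) \<and>
     (\<forall>B1\<in>P. \<forall>B2\<in>P. B1 \<noteq> B2 \<longrightarrow> B1 \<inter> B2 = {}) \<and> \<Union>P = V"

lemma finite_E: "simple_graph V E \<Longrightarrow> finite E"
proof -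
  assume a: "simple_graph V E"
  have "E \<subseteq> Pow V"
  proof
    fix e assume "e \<in> E"
    then obtain u v where "u \<in> V" "v \<in> V" "e = {u, v}" using a unfolding simple_graph_def by blast
    then show "e \<in> Pow V" by auto
  qed
  moreover have "finite V" using a unfolding simple_graph_def by blast
  ultimately show ?thesis by (meson finite_Pow_iff finite_subset)
qed

lemma finite_remaining: "simple_graph V E \<Longrightarrow> finite (remaining_edges E P)"
  unfolding remaining_edges_def using finite_E[of V E] by simp

lemma cut_sub:
  assumes "cut_survives S P"
  shows "cut_edges E S \<subseteq> remaining_edges E P"
  using assms unfolding cut_survives_def cut_edges_def remaining_edges_def by blast

lemma contract_props:
  assumes inv: "part_inv V P" and g: "simple_graph V E" and e: "e \<in> remaining_edges E P"
  shows "part_inv V (contract P e) \<and> card (contract P e) = card P - 1 \<and> card P \<ge> 2 \<and>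
         (cut_survives S P \<and> e \<notin> cut_edges E S \<longrightarrow> cut_survives S (contract P e))"
proof -
  have eE: "e \<in> E" and ne: "\<not> (\<exists>B\<in>P. e \<subseteq> B)" using e unfolding remaining_edges_def by auto
  obtain u v where uv: "u \<in> V" "v \<in> V" "u \<noteq> v" "e = {u, v}"
    using g eE unfolding simple_graph_def by blast
  have fin: "finite P" and nemp: "\<And>B. B \<in> P \<Longrightarrow> B \<noteq> {}"
    and disj: "\<And>B1 B2. B1 \<in> P \<Longrightarrow> B2 \<in> P \<Longrightarrow> B1 \<noteq> B2 \<Longrightarrow> B1 \<inter> B2 = {}"
    and un: "\<Union>P = V" using inv unfolding part_inv_def by auto
  obtain B1 where B1: "B1 \<in> P" "u \<in> B1" using uv un by blast
  obtain B2 where B2: "B2 \<in> P" "v \<in> B2" using uv un by blast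
  have neq: "B1 \<noteq> B2" using ne B1 B2 uv by auto
  have sel: "{B \<in> P. B \<inter> e \<noteq> {}} = {B1, B2}"
  proof
    show "{B \<in> P. B \<inter> e \<noteq> {}} \<subseteq> {B1, B2}"
    proof
      fix B assume "B \<in> {B \<in> P. B \<inter> e \<noteq> {}}"
      then have "B \<in> P" "u \<in> B \<or> v \<in> B" using uv by auto
      then show "B \<in> {B1, B2}" using disj B1 B2 by blast
    qed
    show "{B1, B2} \<subseteq> {B \<in> P. B \<inter> e \<noteq> {}}" using B1 B2 uv by auto
  qed
  have ctr: "contract P e = (P - {B1, B2}) \<union> {B1 \<union> B2}"
    unfolding contract_def sel by auto
  have notin: "B1 \<union> B2 \<notin> P - {B1, B2}"
  proof
    assume "B1 \<union> B2 \<in> P - {B1, B2}"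
    then have "B1 \<union> B2 \<in> P" "B1 \<union> B2 \<noteq> B1" by auto
    then have "(B1 \<union> B2) \<inter> B1 = {}" using disj B1 by blast
    then show False using B1 by auto
  qed
  have c2: "card P \<ge> 2"
  proof -
    have "{B1, B2} \<subseteq> P" using B1 B2 by auto
    then have "card {B1, B2} \<le> card P" using fin by (rule card_mono[rotated])
    then show ?thesis using neq by simp
  qed
  have cardc: "card (contract P e) = card P - 1"
  proof -
    have "card (contract P e) = card (P - {B1, B2}) + 1"
      unfolding ctr using notin fin by simp
    also have "card (P - {B1, B2}) = card P - 2"
      using B1 B2 neq fin by (simp add: card_Diff_subset)
    finally show ?thesis using c2 by simp
  qed
  have inv': "part_inv V (contract P e)"
    unfolding part_inv_def ctr
  proof (intro conjI)
    show "finite (P - {B1, B2} \<union> {B1 \<union> B2})" using fin by simp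
    show "\<forall>B\<in>P - {B1, B2} \<union> {B1 \<union> B2}. B \<noteq> {}" using nemp B1 by auto
    show "\<Union> (P - {B1, B2} \<union> {B1 \<union> B2}) = V" proof -
      have "\<Union> (P - {B1, B2} \<union> {B1 \<union> B2}) = \<Union> P"
      proof
        show "\<Union> (P - {B1, B2} \<union> {B1 \<union> B2}) \<subseteq> \<Union> P" using B1 B2 by auto
        show "\<Union> P \<subseteq> \<Union> (P - {B1, B2} \<union> {B1 \<union> B2})"
        proof
          fix x assume "x \<in> \<Union> P"
          then obtain B where "B \<in> P" "x \<in> B" by blast
          then show "x \<in> \<Union> (P - {B1, B2} \<union> {B1 \<union> B2})"
            by (cases "B = B1 \<or> B = B2") auto
        qed
      qed
      then show ?thesis using un by simp
    qed
    show "\<forall>B1a\<in>P - {B1, B2} \<union> {B1 \<union> B2}. \<forall>B2a\<in>P - {B1, B2} \<union> {B1 \<union> B2}.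
            B1a \<noteq> B2a \<longrightarrow> B1a \<inter> B2a = {}"
    proof (intro ballI impI)
      fix X Y assume X: "X \<in> P - {B1, B2} \<union> {B1 \<union> B2}" and Y: "Y \<in> P - {B1, B2} \<union> {B1 \<union> B2}"
        and XY: "X \<noteq> Y"
      have Z: "Z \<inter> (B1 \<union> B2) = {}" if "Z \<in> P - {B1, B2}" for Z
      proof -
        have "Z \<inter> B1 = {}" using disj[of Z B1] that B1 by auto
        moreover have "Z \<inter> B2 = {}" using disj[of Z B2] that B2 by auto
        ultimately show ?thesis by blast
      qed
      show "X \<inter> Y = {}"
      proof (cases "X = B1 \<union> B2")
        case True
        then have "Y \<in> P - {B1, B2}" using Y XY by auto
        then show ?thesis using Z True by blast
      next
        case False
        then have Xp: "X \<in> P - {B1, B2}" using X by auto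
        show ?thesis
        proof (cases "Y = B1 \<union> B2")
          case True
          then show ?thesis using Z Xp by blast
        next
          case False
          then have "Y \<in> P - {B1, B2}" using Y by auto
          then show ?thesis using disj Xp XY by auto
        qed
      qed
    qed
  qed
  have surv: "cut_survives S (contract P e)" if cs: "cut_survives S P" and nc: "e \<notin> cut_edges E S"
  proof -
    have iff: "u \<in> S \<longleftrightarrow> v \<in> S"
      using nc eE uv unfolding cut_edges_def by blast
    have "B1 \<union> B2 \<subseteq> S \<or> (B1 \<union> B2) \<inter> S = {}"
    proof (cases "u \<in> S")
      case True
      then have "B1 \<subseteq> S" "B2 \<subseteq> S" using cs B1 B2 iff unfolding cut_survives_def by blast+
      then show ?thesis by blast
    next
      case False
      then have "B1 \<inter> S = {}" "B2 \<inter> S = {}" using cs B1 B2 iff unfolding cut_survives_def by blast+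
      then show ?thesis by blast
    qed
    note u12 = this
    show ?thesis unfolding cut_survives_def ctr
    proof
      fix B assume "B \<in> P - {B1, B2} \<union> {B1 \<union> B2}"
      then have "B \<in> P \<or> B = B1 \<union> B2" by blast
      then show "B \<subseteq> S \<or> B \<inter> S = {}"
      proof
        assume "B \<in> P" then show ?thesis using cs unfolding cut_survives_def by blast
      next
        assume "B = B1 \<union> B2" then show ?thesis using u12 by simp
      qed
    qed
  qed
  show ?thesis using inv' cardc c2 surv by blast
qed

lemma main_ind:
  assumes g: "simple_graph V E" and n2: "card V \<ge> 2"
    and C: "card (cut_edges E S) = c"
  shows "part_inv V P \<Longrightarrow> cut_survives S P \<Longrightarrow>
    measure_pmf.prob (krun E (c * card V) t P) {P. cut_survives S P}
      \<ge> (1 - 1 / real (card V)) ^ (card P - 1)"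
proof (induction t arbitrary: P)
  case 0
  have "(1 - 1 / real (card V)) ^ (card P - 1) \<le> 1"
    using n2 by (intro power_le_one) auto
  then show ?case using 0 by simp
next
  case (Suc t)
  define q where "q = 1 - 1 / real (card V)"
  have q0: "0 \<le> q" using n2 unfolding q_def by (simp add: field_simps)
  define R where "R = remaining_edges E P"
  define A where "A = {P. cut_survives S P}"
  show ?case
  proof (cases "card R \<le> c * card V")
    case True
    then have "krun E (c * card V) (Suc t) P = krun E (c * card V) t P"
      unfolding R_def by (simp add: karger_step_def bind_return_pmf)
    then show ?thesis using Suc by simp
  next
    case False
    have finR: "finite R" unfolding R_def using finite_remaining[OF g] .
    have Rne: "R \<noteq> {}" using False by auto
    have eq: "krun E (c * card V) (Suc t) P
        = bind_pmf (pmf_of_set R) (\<lambda>e. krun E (c * card V) t (contract P e))"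
      using False unfolding R_def by (simp add: karger_step_def bind_map_pmf)
    define p where "p = (\<lambda>e. measure_pmf.prob (krun E (c * card V) t (contract P e)) A)"
    define k where "k = card P"
    obtain e0 where e0: "e0 \<in> R" using Rne by blast
    have k2: "k \<ge> 2" using contract_props[OF Suc.prems(1) g e0[unfolded R_def]] unfolding k_def by blast
    have CR: "cut_edges E S \<subseteq> R" unfolding R_def using cut_sub[OF Suc.prems(2)] .
    have pge: "p e \<ge> q ^ (k - 2)" if "e \<in> R - cut_edges E S" for e
    proof -
      have "e \<in> remaining_edges E P" "e \<notin> cut_edges E S" using that unfolding R_def by auto
      from contract_props[OF Suc.prems(1) g this(1), of S] this(2) Suc.prems(2)
      have "part_inv V (contract P e)" "card (contract P e) = k - 1"
        "cut_survives S (contract P e)" unfolding k_def by auto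
      note IH = Suc.IH[OF this(1,3)]
      have kk: "card (contract P e) - 1 = k - 2" using \<open>card (contract P e) = k - 1\<close> by simp
      show ?thesis using IH unfolding kk p_def A_def q_def .
    qed
    have "(\<Sum>e\<in>R. p e) \<ge> (\<Sum>e\<in>R - cut_edges E S. p e)"
      using finR by (intro sum_mono2) (auto simp: p_def)
    moreover have "(\<Sum>e\<in>R - cut_edges E S. p e) \<ge> (\<Sum>e\<in>R - cut_edges E S. q ^ (k - 2))"
      using pge by (intro sum_mono) auto
    moreover have "card (R - cut_edges E S) = card R - c"
      using CR finR C by (simp add: card_Diff_subset finite_subset)
    ultimately have sumge: "(\<Sum>e\<in>R. p e) \<ge> real (card R - c) * q ^ (k - 2)"
      by simp
    have cle: "c \<le> card R" using CR finR C card_mono by blast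
    have rpos: "real (card R) > 0" using finR Rne by (simp add: card_gt_0_iff)
    have qle: "q \<le> real (card R - c) / real (card R)"
    proof -
      have "real c * real (card V) \<le> real (card R)"
        using False by (simp flip: of_nat_mult)
      then have "real c \<le> real (card R) / real (card V)"
        using n2 by (simp add: field_simps)
      then show ?thesis unfolding q_def using rpos cle n2
        by (simp add: of_nat_diff field_simps)
    qed
    have "measure_pmf.prob (krun E (c * card V) (Suc t) P) A = (\<Sum>e\<in>R. p e) / card R"
      unfolding eq p_def by (rule prob_bind_pmf_of_set[OF finR Rne])
    also have "\<dots> \<ge> real (card R - c) * q ^ (k - 2) / card R"
      using sumge rpos by (simp add: divide_right_mono)
    finally have "measure_pmf.prob (krun E (c * card V) (Suc t) P) A
        \<ge> (real (card R - c) / card R) * q ^ (k - 2)" by simp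
    moreover have "(real (card R - c) / card R) * q ^ (k - 2) \<ge> q * q ^ (k - 2)"
      using qle q0 by (intro mult_right_mono) auto
    moreover have "q * q ^ (k - 2) = q ^ (k - 1)"
    proof -
      have "k - 1 = Suc (k - 2)" using k2 by simp
      then show ?thesis by simp
    qed
    ultimately show ?thesis unfolding A_def q_def k_def by linarith
  qed
qed

lemma exp_bound:
  fixes m :: nat assumes "m \<ge> 1"
  shows "exp (-1) \<le> (1 - 1 / real (Suc m)) ^ m"
proof -
  have "(1 + 1 / real m) ^ m \<le> exp (1 / real m) ^ m"
    using exp_ge_add_one_self[of "1 / real m"] by (intro power_mono) (auto simp: add.commute)
  also have "\<dots> = exp 1"
    using assms by (simp flip: exp_of_nat_mult)
  finally have a: "(1 + 1 / real m) ^ m \<le> exp 1" .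
  have b: "1 - 1 / real (Suc m) = inverse (1 + 1 / real m)"
    using assms by (simp add: field_simps)
  have "exp (-1) = inverse (exp (1::real))" by (rule exp_minus)
  also have "\<dots> \<le> inverse ((1 + 1 / real m) ^ m)"
    using a by (intro le_imp_inverse_le) (auto intro!: zero_less_power add_pos_nonneg)
  also have "\<dots> = (1 - 1 / real (Suc m)) ^ m" unfolding b by (rule power_inverse[symmetric])
  finally show ?thesis .
qed

theorem mainTheorem5:
  shows "\<exists>\<delta>::real. \<delta> > 0 \<and>
    (\<forall>(V::nat set) (E::nat set set) (S::nat set).
       simple_graph V E \<and> min_cut_value V E \<ge> 1 \<and>
       S \<noteq> {} \<and> S \<subset> V \<and> card (cut_edges E S) = min_cut_value V E \<longrightarrow>
       measure_pmf.prob (karger_run V E (min_cut_value V E * card V)) {P. cut_survives S P} \<ge> \<delta>)"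
proof (intro exI[of _ "exp (-1)"] conjI allI impI)
  show "(0::real) < exp (-1)" by simp
  fix V :: "nat set" and E :: "nat set set" and S :: "nat set"
  assume h: "simple_graph V E \<and> min_cut_value V E \<ge> 1 \<and>
       S \<noteq> {} \<and> S \<subset> V \<and> card (cut_edges E S) = min_cut_value V E"
  then have g: "simple_graph V E" and Sne: "S \<noteq> {}" and SV: "S \<subset> V"
    and C: "card (cut_edges E S) = min_cut_value V E" by auto
  have finV: "finite V" using g unfolding simple_graph_def by auto
  obtain x where x: "x \<in> S" using Sne by blast
  obtain y where y: "y \<in> V" "y \<notin> S" using SV by blast
  have "x \<noteq> y" "{x, y} \<subseteq> V" using x y SV by auto
  then have n2: "card V \<ge> 2" using finV
    by (metis card_2_iff card_mono)
  define I where "I = (\<lambda>v. {v}) ` V"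
  have invI: "part_inv V I" unfolding part_inv_def I_def using finV by auto
  have survI: "cut_survives S I" unfolding cut_survives_def I_def by auto
  have cardI: "card I = card V" unfolding I_def by (simp add: card_image inj_on_def)
  have run: "karger_run V E (min_cut_value V E * card V) = krun E (min_cut_value V E * card V) (card V) I"
    unfolding karger_run_def funpow_krun I_def by (simp add: bind_return_pmf)
  have "(1 - 1 / real (card V)) ^ (card I - 1) \<le>
      measure_pmf.prob (krun E (min_cut_value V E * card V) (card V) I) {P. cut_survives S P}"
    using main_ind[OF g n2 C invI survI] .
  moreover have "exp (-1) \<le> (1 - 1 / real (card V)) ^ (card I - 1)"
  proof -
    define m where "m = card V - 1"
    have m: "card V = Suc m" "m \<ge> 1" using n2 unfolding m_def by auto
    show ?thesis using exp_bound[OF m(2)] m(1) cardI by simp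
  qed
  ultimately show "exp (-1) \<le> measure_pmf.prob (karger_run V E (min_cut_value V E * card V)) {P. cut_survives S P}"
    using run by simp
qed

end
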